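(* If $f,g:\mathbb{R}^{N}\rightarrow [-\infty ,\infty ]$ are Borel measurable, then $f\barwedge g$ and $f\veebar g$ are Lebesgue measurable.
   Context: $(f\barwedge g)(x):=\sup_{y\in\mathbb{R}^N}\min\{f(x-y),g(y)\}$ and $(f\veebar g)(x):=\inf_{y\in\mathbb{R}^N}\max\{f(x-y),g(y)\}$. *)

theory Defs
  imports "HOL-Analysis.Analysis"
begin

definition sup_min_conv :: "('a::ab_group_add \<Rightarrow> ereal) \<Rightarrow> ('a \<Rightarrow> ereal) \<Rightarrow> 'a \<Rightarrow> ereal" where
  "sup_min_conv f g x = (SUP y. min (f (x - y)) (g y))"

definition inf_max_conv :: "('a::ab_group_add \<Rightarrow> ereal) \<Rightarrow> ('a \<Rightarrow> ereal) \<Rightarrow> 'a \<Rightarrow> ereal" where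
  "inf_max_conv f g x = (INF y. max (f (x - y)) (g y))"

end

theory Submission
  imports Defs
begin


lemma tendsto_fun_componentwise:
  fixes s :: "'c \<Rightarrow> 'i \<Rightarrow> 'b::topological_space"
  assumes "\<And>i. ((\<lambda>n. s n i) \<longlongrightarrow> l i) F"
  shows "(s \<longlongrightarrow> l) F"
proof (rule topological_tendstoI)
  fix U :: "('i \<Rightarrow> 'b) set" assume U: "open U" "l \<in> U"
  then obtain X where X: "l \<in> (\<Pi>\<^sub>E i\<in>UNIV. X i)" "\<forall>i. openin euclidean (X i)"
     "finite {i. X i \<noteq> topspace euclidean}" "(\<Pi>\<^sub>E i\<in>UNIV. X i) \<subseteq> U"
    using product_topology_open_contains_basis[of "\<lambda>i. euclidean" UNIV U l]
    unfolding open_fun_def by auto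
  have "eventually (\<lambda>n. \<forall>i\<in>{i. X i \<noteq> UNIV}. s n i \<in> X i) F"
    using X(3) 
  proof (intro eventually_ball_finite ballI)
    fix i assume "i \<in> {i. X i \<noteq> UNIV}"
    show "eventually (\<lambda>n. s n i \<in> X i) F"
      using topological_tendstoD[OF assms[of i], of "X i"] X(1,2) by (auto simp: PiE_iff)
  qed simp
  then show "eventually (\<lambda>n. s n \<in> U) F"
  proof eventually_elim
    case (elim n)
    have "s n \<in> (\<Pi>\<^sub>E i\<in>UNIV. X i)"
      proof (simp add: PiE_iff, intro allI)
      fix i show "s n i \<in> X i" using elim by (cases "X i = UNIV") auto
    qed
    then show ?case using X(4) by blast
  qed
qed

lemma tendsto_fun_coord:
  fixes s :: "'c \<Rightarrow> 'i \<Rightarrow> 'b::topological_space"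
  assumes "(s \<longlongrightarrow> l) F"
  shows "((\<lambda>n. s n i) \<longlongrightarrow> l i) F"
  using continuous_on_tendsto_compose[OF continuous_on_product_coordinates[of i] assms] by auto

lemma tendsto_fun_iff:
  fixes s :: "'c \<Rightarrow> 'i \<Rightarrow> 'b::topological_space"
  shows "(s \<longlongrightarrow> l) F \<longleftrightarrow> (\<forall>i. ((\<lambda>n. s n i) \<longlongrightarrow> l i) F)"
  using tendsto_fun_componentwise tendsto_fun_coord by metis

definition suslin :: "'a::metric_space set \<Rightarrow> bool" where
  "suslin A \<longleftrightarrow> (\<exists>F::('a \<times> (nat \<Rightarrow> nat)) set. closed F \<and> A = fst ` F)"

lemma suslin_closed: "closed A \<Longrightarrow> suslin A"
  unfolding suslin_def by (intro exI[of _ "A \<times> UNIV"]) (auto intro: closed_Times)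

lemma suslin_Union:
  fixes A :: "nat \<Rightarrow> 'a::metric_space set"
  assumes "\<And>n. suslin (A n)"
  shows "suslin (\<Union>n. A n)"
proof -
  have "\<forall>n. \<exists>F::('a \<times> (nat \<Rightarrow> nat)) set. closed F \<and> A n = fst ` F" using assms unfolding suslin_def by blast
  then obtain F :: "nat \<Rightarrow> ('a \<times> (nat \<Rightarrow> nat)) set" where F0: "\<forall>n. closed (F n) \<and> A n = fst ` F n" by metis
  then have F: "\<And>n. closed (F n)" "\<And>n. A n = fst ` F n" by auto
  define G where "G = {p::'a \<times> (nat \<Rightarrow> nat). (fst p, snd p \<circ> Suc) \<in> F (snd p 0)}"
  have "closed G"
    unfolding closed_sequential_limits
  proof (intro allI impI, elim conjE)
    fix x :: "nat \<Rightarrow> 'a \<times> (nat \<Rightarrow> nat)" and l assume xG: "\<forall>n. x n \<in> G" and lim: "x \<longlonglongrightarrow> l"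
    have l1: "(\<lambda>k. fst (x k)) \<longlonglongrightarrow> fst l" and l2: "(\<lambda>k. snd (x k)) \<longlonglongrightarrow> snd l"
      using lim by (auto intro: tendsto_fst tendsto_snd)
    have "(\<lambda>k. snd (x k) 0) \<longlonglongrightarrow> snd l 0" using tendsto_fun_coord[OF l2] .
    then have ev: "eventually (\<lambda>k. snd (x k) 0 = snd l 0) sequentially"
      by (simp add: tendsto_discrete)
    have l3: "(\<lambda>k. snd (x k) \<circ> Suc) \<longlonglongrightarrow> (snd l \<circ> Suc)"
      using l2 by (simp add: tendsto_fun_iff o_def)
    have "(\<lambda>k. (fst (x k), snd (x k) \<circ> Suc)) \<longlonglongrightarrow> (fst l, snd l \<circ> Suc)"
      using l1 l3 by (rule tendsto_Pair)
    moreover have "eventually (\<lambda>k. (fst (x k), snd (x k) \<circ> Suc) \<in> F (snd l 0)) sequentially"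
      using ev
    proof eventually_elim
      case (elim k)
      have "(fst (x k), snd (x k) \<circ> Suc) \<in> F (snd (x k) 0)" using xG by (simp add: G_def)
      then show ?case using elim by simp
    qed
    ultimately have "(fst l, snd l \<circ> Suc) \<in> F (snd l 0)"
      by (intro Lim_in_closed_set[OF F(1)]) auto
    then show "l \<in> G" by (simp add: G_def)
  qed
  moreover have "fst ` G = (\<Union>n. A n)"
  proof (intro equalityI subsetI)
    fix a assume "a \<in> fst ` G"
    then obtain \<sigma> where "(a, \<sigma>) \<in> G" by force
    then show "a \<in> (\<Union>n. A n)" using F(2) by (force simp: G_def)
  next
    fix a assume "a \<in> (\<Union>n. A n)"
    then obtain n \<tau> where "(a, \<tau>) \<in> F n" using F(2) by force
    then have "(a, case_nat n \<tau>) \<in> G" by (simp add: G_def o_def)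
    then show "a \<in> fst ` G" by force
  qed
  ultimately show ?thesis unfolding suslin_def by blast
qed

lemma suslin_Inter:
  fixes A :: "nat \<Rightarrow> 'a::metric_space set"
  assumes "\<And>n. suslin (A n)"
  shows "suslin (\<Inter>n. A n)"
proof -
  have "\<forall>n. \<exists>F::('a \<times> (nat \<Rightarrow> nat)) set. closed F \<and> A n = fst ` F" using assms unfolding suslin_def by blast
  then obtain F :: "nat \<Rightarrow> ('a \<times> (nat \<Rightarrow> nat)) set" where F0: "\<forall>n. closed (F n) \<and> A n = fst ` F n" by metis
  then have F: "\<And>n. closed (F n)" "\<And>n. A n = fst ` F n" by auto
  define G where "G = {p::'a \<times> (nat \<Rightarrow> nat). \<forall>n. (fst p, \<lambda>k. snd p (prod_encode (n,k))) \<in> F n}"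
  have "closed G"
    unfolding closed_sequential_limits
  proof (intro allI impI, elim conjE)
    fix x :: "nat \<Rightarrow> 'a \<times> (nat \<Rightarrow> nat)" and l assume xG: "\<forall>n. x n \<in> G" and lim: "x \<longlonglongrightarrow> l"
    have l1: "(\<lambda>k. fst (x k)) \<longlonglongrightarrow> fst l" and l2: "(\<lambda>k. snd (x k)) \<longlonglongrightarrow> snd l"
      using lim by (auto intro: tendsto_fst tendsto_snd)
    show "l \<in> G" unfolding G_def
    proof (safe)
      fix n
      have l3: "(\<lambda>j. \<lambda>k. snd (x j) (prod_encode (n,k))) \<longlonglongrightarrow> (\<lambda>k. snd l (prod_encode (n,k)))"
        using l2 by (simp add: tendsto_fun_iff)
      have "(\<lambda>j. (fst (x j), \<lambda>k. snd (x j) (prod_encode (n,k)))) \<longlonglongrightarrow> (fst l, \<lambda>k. snd l (prod_encode (n,k)))"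
        using l1 l3 by (rule tendsto_Pair)
      moreover have "\<forall>j. (fst (x j), \<lambda>k. snd (x j) (prod_encode (n,k))) \<in> F n"
        using xG by (auto simp: G_def)
      ultimately show "(fst l, \<lambda>k. snd l (prod_encode (n,k))) \<in> F n"
        by (intro Lim_in_closed_set[OF F(1)]) auto
    qed
  qed
  moreover have "fst ` G = (\<Inter>n. A n)"
  proof (intro equalityI subsetI)
    fix a assume "a \<in> fst ` G"
    then obtain \<sigma> where "(a, \<sigma>) \<in> G" by force
    then show "a \<in> (\<Inter>n. A n)" using F(2) by (force simp: G_def)
  next
    fix a assume "a \<in> (\<Inter>n. A n)"
    then have "\<forall>n. \<exists>\<tau>. (a, \<tau>) \<in> F n" using F(2) by force
    then obtain \<tau> where \<tau>: "\<And>n. (a, \<tau> n) \<in> F n" by metis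
    define \<sigma> where "\<sigma> j = (case prod_decode j of (n,k) \<Rightarrow> \<tau> n k)" for j
    have "(\<lambda>k. \<sigma> (prod_encode (n,k))) = \<tau> n" for n
      by (simp add: \<sigma>_def)
    then have "(a, \<sigma>) \<in> G" using \<tau> by (simp add: G_def)
    then show "a \<in> fst ` G" by force
  qed
  ultimately show ?thesis unfolding suslin_def by blast
qed

lemma suslin_open:
  fixes A :: "'a::metric_space set"
  assumes "open A"
  shows "suslin A"
proof -
  define C where "C n = (\<Inter>y\<in>-A. - ball y (1 / Suc n))" for n :: nat
  have "closed (C n)" for n unfolding C_def by (intro closed_INT) auto
  then have s: "suslin (C n)" for n by (rule suslin_closed)
  have "(\<Union>n. C n) = A"
  proof (intro equalityI subsetI)
    fix x assume "x \<in> (\<Union>n. C n)"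
    then obtain n where "x \<in> C n" by auto
    show "x \<in> A"
    proof (rule ccontr)
      assume "x \<notin> A"
      with \<open>x \<in> C n\<close> have "x \<in> - ball x (1 / Suc n)" unfolding C_def by blast
      then show False by simp
    qed
  next
    fix x assume "x \<in> A"
    then obtain e where e: "e > 0" "ball x e \<subseteq> A" using assms open_contains_ball by blast
    then obtain n :: nat where n: "1 / Suc n < e" using nat_approx_posE by blast
    have "x \<in> C n" unfolding C_def
    proof
      fix y assume "y \<in> -A"
      have "dist x y \<ge> e"
      proof (rule ccontr)
        assume "\<not> e \<le> dist x y"
        then have "y \<in> ball x e" by simp
        with e \<open>y \<in> -A\<close> show False by blast
      qed
      then show "x \<in> - ball y (1 / Suc n)" using n by (auto simp: dist_commute)
    qed
    then show "x \<in> (\<Union>n. C n)" by blast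
  qed
  moreover have "suslin (\<Union>n. C n)" by (rule suslin_Union) (rule s)
  ultimately show ?thesis by simp
qed

lemma suslin_borel:
  fixes A :: "'a::metric_space set"
  assumes "A \<in> sets borel"
  shows "suslin A"
proof -
  have "A \<in> sigma_sets UNIV {S. open S}" using assms by (simp add: sets_borel)
  then have "suslin A \<and> suslin (- A)"
  proof induction
    case (Basic a)
    then have "open a" by simp
    then have "closed (-a)" by (rule closed_Compl)
    then show ?case using suslin_open[OF \<open>open a\<close>] suslin_closed by blast
  next
    case Empty
    have "suslin ({}::'a set)" "suslin (UNIV::'a set)" by (rule suslin_closed, simp)+
    then show ?case by (metis Compl_empty_eq)
  next
    case (Compl a)
    have "UNIV - a = - a" by blast
    then show ?case using Compl.IH by (metis double_compl)
  next
    case (Union a)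
    have 1: "suslin (\<Union>i. a i)" by (rule suslin_Union) (use Union in blast)
    have "suslin (\<Inter>i. - a i)" by (rule suslin_Inter) (use Union in blast)
    moreover have "(\<Inter>i. - a i) = - (\<Union>i. a i)" by blast
    ultimately show ?case using 1 by metis
  qed
  then show ?thesis by simp
qed



lemma closed_sets_lebesgue: "closed (K::'a::euclidean_space set) \<Longrightarrow> K \<in> sets lebesgue"
  by (simp add: borel_closed)

lemma lebesgue_inner_crit:
  fixes S :: "'a::euclidean_space set"
  assumes fin: "outer_measure_of lebesgue S < \<infinity>"
  and inner: "\<And>c. c < outer_measure_of lebesgue S \<Longrightarrow> \<exists>K\<in>sets lebesgue. K \<subseteq> S \<and> c \<le> emeasure lebesgue K"
  shows "S \<in> sets lebesgue"
proof -
  obtain E where E: "E \<in> sets lebesgue" "S \<subseteq> E" "outer_measure_of lebesgue S = emeasure lebesgue E"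
    using outer_measure_of_attain[of S lebesgue] by auto
  define \<K> where "\<K> = {K\<in>sets lebesgue. K \<subseteq> S}"
  have "{} \<in> \<K>" by (simp add: \<K>_def)
  then have "\<K> \<noteq> {}" by blast
  then obtain f :: "nat \<Rightarrow> ennreal" where f: "range f \<subseteq> emeasure lebesgue ` \<K>" "Sup (emeasure lebesgue ` \<K>) = Sup (range f)"
    using ennreal_SUP_countable_SUP[of \<K> "emeasure lebesgue"] by metis
  have "\<forall>j. \<exists>K. K \<in> \<K> \<and> f j = emeasure lebesgue K" using f(1) by blast
  then obtain K where K: "\<And>j. K j \<in> \<K>" "\<And>j. f j = emeasure lebesgue (K j)" by metis
  define L where "L = (\<Union>j. K j)"
  have "range K \<subseteq> sets lebesgue" using K(1) by (auto simp: \<K>_def)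
  then have L1: "L \<in> sets lebesgue" unfolding L_def by (rule sets.countable_UN)
  have L2: "L \<subseteq> S" using K(1) by (auto simp: L_def \<K>_def)
  note L = L1 L2
  have "outer_measure_of lebesgue S \<le> Sup (emeasure lebesgue ` \<K>)"
  proof (rule dense_le)
    fix c assume "c < outer_measure_of lebesgue S"
    then obtain K' where "K' \<in> sets lebesgue" "K' \<subseteq> S" "c \<le> emeasure lebesgue K'" using inner by blast
    then have "emeasure lebesgue K' \<le> Sup (emeasure lebesgue ` \<K>)"
      by (intro Sup_upper) (auto simp: \<K>_def)
    then show "c \<le> Sup (emeasure lebesgue ` \<K>)" using \<open>c \<le> emeasure lebesgue K'\<close> by order
  qed
  also have "\<dots> = Sup (range f)" by (rule f(2))
  also have "\<dots> \<le> emeasure lebesgue L"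
  proof (rule Sup_least)
    fix x assume "x \<in> range f"
    then obtain j where "x = f j" by blast
    moreover have "K j \<subseteq> L" by (auto simp: L_def)
    ultimately show "x \<le> emeasure lebesgue L" using K(2)[of j] L1 emeasure_mono by metis
  qed
  finally have le: "emeasure lebesgue E \<le> emeasure lebesgue L" using E by simp
  have "emeasure lebesgue (E - L) = emeasure lebesgue E - emeasure lebesgue L"
  proof (rule emeasure_Diff)
    have "emeasure lebesgue L \<le> emeasure lebesgue E" by (rule emeasure_mono) (use E L in auto)
    then have "emeasure lebesgue L < \<infinity>" using fin E(3) by order
    then show "emeasure lebesgue L \<noteq> \<infinity>" by simp
  qed (use E L in auto)
  also have "\<dots> = 0"
  proof -
    have "emeasure lebesgue E < \<infinity>" using fin unfolding E(3) .
    then show ?thesis using le diff_eq_0_iff_ennreal by (metis infinity_ennreal_def less_imp_neq)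
  qed
  finally have "E - L \<in> null_sets lebesgue" using E L by (auto simp: null_sets_def)
  moreover have "S - L \<subseteq> E - L" using E(2) by blast
  ultimately have "S - L \<in> null_sets lebesgue"
    using null_sets_completion_subset by blast
  then have "S - L \<in> sets lebesgue" by (rule null_setsD2)
  then have "L \<union> (S - L) \<in> sets lebesgue" using L1 by (rule sets.Un[rotated])
  moreover have "L \<union> (S - L) = S" using L by auto
  ultimately show ?thesis by simp
qed



definition bnd :: "(nat \<Rightarrow> nat) \<Rightarrow> nat \<Rightarrow> ('a::real_normed_vector \<times> (nat \<Rightarrow> nat)) \<Rightarrow> bool" where
  "bnd m n p \<longleftrightarrow> (0 < n \<longrightarrow> norm (fst p) \<le> real (m 0)) \<and> (\<forall>i. Suc i < n \<longrightarrow> snd p i \<le> m (Suc i))"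

definition Sn :: "('a \<times> ('b::real_normed_vector \<times> (nat \<Rightarrow> nat))) set \<Rightarrow> (nat \<Rightarrow> nat) \<Rightarrow> nat \<Rightarrow> 'a set" where
  "Sn H m n = fst ` {q\<in>H. bnd m n (snd q)}"

lemma Sn_0: "Sn H m 0 = fst ` H"
  by (simp add: Sn_def bnd_def)

lemma bnd_cong: "(\<And>i. i < n \<Longrightarrow> m i = m' i) \<Longrightarrow> bnd m n p = bnd m' n p"
  unfolding bnd_def by (metis Suc_lessD zero_less_iff_neq_zero)

lemma Sn_cong:
  assumes "\<And>i. i < n \<Longrightarrow> m i = m' i" shows "Sn H m n = Sn H m' n"
proof -
  have e: "bnd m n = bnd m' n" using bnd_cong[of n m m'] assms by blast
  show ?thesis unfolding Sn_def e ..
qed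

lemma bnd_Suc: "bnd m (Suc n) p \<Longrightarrow> bnd m n p"
  unfolding bnd_def by auto

lemma Sn_Suc: "Sn H m (Suc n) \<subseteq> Sn H m n"
  unfolding Sn_def using bnd_Suc by blast

lemma bnd_upd_mono: "k \<le> k' \<Longrightarrow> bnd (m(n:=k)) (Suc n) p \<Longrightarrow> bnd (m(n:=k')) (Suc n) p"
  unfolding bnd_def by (auto simp: fun_upd_def)

lemma bnd_upd_exists:
  assumes "bnd m n p"
  shows "\<exists>k. bnd (m(n:=k)) (Suc n) p"
proof -
  define k where "k = max (nat \<lceil>norm (fst p)\<rceil>) (snd p (n - 1))"
  have "bnd (m(n:=k)) (Suc n) p"
    unfolding bnd_def
  proof (intro conjI impI allI)
    show "norm (fst p) \<le> real ((m(n := k)) 0)"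
    proof (cases "n = 0")
      case True
      have "norm (fst p) \<le> real (nat \<lceil>norm (fst p)\<rceil>)" by linarith
      also have "\<dots> \<le> real k" unfolding k_def by simp
      finally show ?thesis using True by simp
    next
      case False
      then show ?thesis using assms by (simp add: bnd_def)
    qed
  next
    fix i assume i: "Suc i < Suc n"
    show "snd p i \<le> (m(n := k)) (Suc i)"
    proof (cases "Suc i = n")
      case True
      then show ?thesis by (auto simp: k_def)
    next
      case False
      then show ?thesis using assms i by (simp add: bnd_def)
    qed
  qed
  then show ?thesis by blast
qed

lemma Sn_upd_incseq: "incseq (\<lambda>k. Sn H (m(n:=k)) (Suc n))"
  unfolding incseq_def Sn_def using bnd_upd_mono by blast

lemma Sn_upd_Union: "(\<Union>k. Sn H (m(n:=k)) (Suc n)) = Sn H m n"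
proof (intro equalityI subsetI)
  fix x assume "x \<in> (\<Union>k. Sn H (m(n:=k)) (Suc n))"
  then obtain k where "x \<in> Sn H (m(n:=k)) (Suc n)" by blast
  then have "x \<in> Sn H (m(n:=k)) n" using Sn_Suc[of H "m(n:=k)" n] by blast
  moreover have "Sn H (m(n:=k)) n = Sn H m n" by (rule Sn_cong) simp
  ultimately show "x \<in> Sn H m n" by simp
next
  fix x assume "x \<in> Sn H m n"
  then obtain p where p: "(x, p) \<in> H" "bnd m n p" unfolding Sn_def by force
  then obtain k where "bnd (m(n:=k)) (Suc n) p" using bnd_upd_exists by blast
  then have "x \<in> Sn H (m(n:=k)) (Suc n)" using p unfolding Sn_def by force
  then show "x \<in> (\<Union>k. Sn H (m(n:=k)) (Suc n))" by blast
qed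

lemma Sn_choice:
  fixes H :: "('a::euclidean_space \<times> ('b::real_normed_vector \<times> (nat \<Rightarrow> nat))) set"
  assumes "c < outer_measure_of lebesgue (fst ` H)"
  shows "\<exists>mm. \<forall>n. c < outer_measure_of lebesgue (Sn H mm n)"
proof -
  let ?o = "outer_measure_of lebesgue"
  have "\<exists>f. \<forall>n. c < ?o (Sn H (f n) n) \<and> (\<exists>k. f (Suc n) = (f n)(n:=k))"
  proof (rule dependent_nat_choice)
    show "\<exists>x. c < ?o (Sn H x 0)" using assms by (simp add: Sn_0)
  next
    fix x n assume "c < ?o (Sn H x n)"
    moreover have "(SUP k. ?o (Sn H (x(n:=k)) (Suc n))) = ?o (\<Union>k. Sn H (x(n:=k)) (Suc n))"
      by (rule SUP_outer_measure_of_incseq) (auto intro: Sn_upd_incseq)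
    ultimately have "c < (SUP k. ?o (Sn H (x(n:=k)) (Suc n)))"
      by (simp add: Sn_upd_Union)
    then obtain k where "c < ?o (Sn H (x(n:=k)) (Suc n))" by (auto simp: less_SUP_iff)
    then show "\<exists>y. c < ?o (Sn H y (Suc n)) \<and> (\<exists>k. y = x(n:=k))" by blast
  qed
  then obtain f :: "nat \<Rightarrow> nat \<Rightarrow> nat" where f: "\<And>n. c < ?o (Sn H (f n) n)" "\<And>n. \<exists>k. f (Suc n) = (f n)(n:=k)" by metis
  define mm where "mm i = f (Suc i) i" for i
  have agree: "i < n \<Longrightarrow> f n i = mm i" for n i
  proof (induction n)
    case 0 then show ?case by simp
  next
    case (Suc n)
    obtain k where k: "f (Suc n) = (f n)(n:=k)" using f(2) by blast
    show ?case
    proof (cases "i = n")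
      case True then show ?thesis by (simp add: mm_def)
    next
      case False
      then have "i < n" using Suc.prems by simp
      then show ?thesis using Suc.IH k False by simp
    qed
  qed
  have "Sn H mm n = Sn H (f n) n" for n by (rule Sn_cong) (simp add: agree)
  then show ?thesis using f(1) by (intro exI[of _ mm]) simp
qed

lemma Sn_closure_Inter:
  fixes H :: "('a::metric_space \<times> ('b::euclidean_space \<times> (nat \<Rightarrow> nat))) set"
  assumes "closed H"
  shows "(\<Inter>n. closure (Sn H mm n)) \<subseteq> fst ` H"
proof
  fix x assume x: "x \<in> (\<Inter>n. closure (Sn H mm n))"
  have "\<forall>n. \<exists>y p. (y, p) \<in> H \<and> bnd mm n p \<and> dist y x < 1 / Suc n"
  proof
    fix n
    have "x \<in> closure (Sn H mm n)" using x by blast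
    then obtain y where "y \<in> Sn H mm n" "dist y x < 1 / Suc n"
      unfolding closure_approachable by (meson of_nat_0_less_iff zero_less_Suc divide_pos_pos zero_less_one)
    then show "\<exists>y p. (y, p) \<in> H \<and> bnd mm n p \<and> dist y x < 1 / Suc n" unfolding Sn_def by force
  qed
  then obtain y :: "nat \<Rightarrow> 'a" and p :: "nat \<Rightarrow> 'b \<times> (nat \<Rightarrow> nat)"
    where yp: "\<And>n. (y n, p n) \<in> H" "\<And>n. bnd mm n (p n)" "\<And>n. dist (y n) x < 1 / Suc n" by metis
  define q where "q n = (fst (p (Suc n)), \<lambda>i. min (snd (p (Suc n)) i) (mm (Suc i)))" for n
  define T where "T = (PiE UNIV (\<lambda>i. {..mm (Suc i)}) :: (nat \<Rightarrow> nat) set)"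
  have "compactin (product_topology (\<lambda>i. euclidean) UNIV) T"
    unfolding T_def compactin_PiE by (simp add: finite_imp_compact)
  then have "compact T" by (simp add: euclidean_product_topology)
  define Q where "Q = cball (0::'b) (real (mm 0)) \<times> T"
  have "compact Q" unfolding Q_def using \<open>compact T\<close> by (intro compact_Times) auto
  have qQ: "\<forall>n. q n \<in> Q"
  proof
    fix n
    have "norm (fst (p (Suc n))) \<le> real (mm 0)" using yp(2)[of "Suc n"] by (simp add: bnd_def)
    then show "q n \<in> Q" by (simp add: q_def Q_def T_def PiE_iff)
  qed
  obtain l r where l: "l \<in> Q" "strict_mono r" "(q \<circ> r) \<longlonglongrightarrow> l"
    using seq_compactE[OF compact_imp_seq_compact[OF \<open>compact Q\<close>] qQ] by blast
  have y_lim: "y \<longlonglongrightarrow> x"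
  proof (rule metric_LIMSEQ_I)
    fix e :: real assume "0 < e"
    then obtain N :: nat where N: "1 / Suc N < e" using nat_approx_posE by blast
    have "dist (y n) x < e" if "n \<ge> N" for n
    proof -
      have "1 / real (Suc n) \<le> 1 / Suc N" using that by (simp add: frac_le)
      then show ?thesis using yp(3)[of n] N by linarith
    qed
    then show "\<exists>no. \<forall>n\<ge>no. dist (y n) x < e" by blast
  qed
  have y2: "(\<lambda>n. y (Suc (r n))) \<longlonglongrightarrow> x"
    using LIMSEQ_subseq_LIMSEQ[OF LIMSEQ_Suc[OF y_lim] l(2)] by (simp add: o_def)
  have q1: "(\<lambda>n. fst (q (r n))) \<longlonglongrightarrow> fst l" and q2: "(\<lambda>n. snd (q (r n))) \<longlonglongrightarrow> snd l"
    using l(3) by (auto simp: o_def intro: tendsto_fst tendsto_snd)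
  have p1: "(\<lambda>n. fst (p (Suc (r n)))) \<longlonglongrightarrow> fst l" using q1 by (simp add: q_def)
  have p2: "(\<lambda>n. snd (p (Suc (r n)))) \<longlonglongrightarrow> snd l"
    unfolding tendsto_fun_iff
  proof
    fix i
    have "(\<lambda>n. snd (q (r n)) i) \<longlonglongrightarrow> snd l i" using tendsto_fun_coord[OF q2] .
    moreover have "eventually (\<lambda>n. snd (q (r n)) i = snd (p (Suc (r n))) i) sequentially"
      unfolding eventually_sequentially
    proof (intro exI allI impI)
      fix n assume "Suc i \<le> n"
      then have "Suc i < Suc (r n)" using seq_suble[OF l(2), of n] by simp
      then have "snd (p (Suc (r n))) i \<le> mm (Suc i)" using yp(2)[of "Suc (r n)"] by (simp add: bnd_def)
      then show "snd (q (r n)) i = snd (p (Suc (r n))) i" by (simp add: q_def)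
    qed
    ultimately show "(\<lambda>n. snd (p (Suc (r n))) i) \<longlonglongrightarrow> snd l i" by (rule Lim_transform_eventually)
  qed
  have "(\<lambda>n. p (Suc (r n))) \<longlonglongrightarrow> (fst l, snd l)"
    using tendsto_Pair[OF p1 p2] by simp
  then have "(\<lambda>n. (y (Suc (r n)), p (Suc (r n)))) \<longlonglongrightarrow> (x, l)"
    using tendsto_Pair[OF y2] by simp
  then have "(x, l) \<in> H"
    using yp(1) by (intro Lim_in_closed_set[OF assms]) auto
  then show "x \<in> fst ` H" by force
qed

lemma closed_proj_lebesgue_bounded:
  fixes H :: "('a::euclidean_space \<times> ('b::euclidean_space \<times> (nat \<Rightarrow> nat))) set"
  assumes "closed H" "bounded (fst ` H)"
  shows "fst ` H \<in> sets lebesgue"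
proof (rule lebesgue_inner_crit)
  have "outer_measure_of lebesgue (fst ` H) \<le> outer_measure_of lebesgue (closure (fst ` H))"
    by (rule outer_measure_of_mono) (rule closure_subset)
  also have "\<dots> = emeasure lebesgue (closure (fst ` H))"
    by (rule outer_measure_of_eq) (simp add: borel_closed)
  also have "\<dots> < \<infinity>"
    using emeasure_bounded_finite[of "closure (fst ` H)"] assms(2) by (simp add: borel_closed bounded_closure)
  finally show "outer_measure_of lebesgue (fst ` H) < \<infinity>" .
next
  fix c assume "c < outer_measure_of lebesgue (fst ` H)"
  then obtain mm where mm: "\<And>n. c < outer_measure_of lebesgue (Sn H mm n)" using Sn_choice[of c H] by metis
  define C where "C n = closure (Sn H mm n)" for n
  have C: "\<And>n. C n \<in> sets lebesgue" unfolding C_def by (simp add: borel_closed)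
  have "decseq C" unfolding decseq_Suc_iff C_def by (intro allI closure_mono Sn_Suc)
  have SnH: "Sn H mm n \<subseteq> fst ` H" for n unfolding Sn_def by blast
  have "bounded (C 0)" unfolding C_def by (rule bounded_closure[OF bounded_subset[OF assms(2) SnH]])
  then have fin: "emeasure lebesgue (C 0) \<noteq> \<infinity>"
    using emeasure_bounded_finite[of "C 0"] by (simp add: C_def borel_closed)
  have eq: "(INF n. emeasure lebesgue (C n)) = emeasure lebesgue (\<Inter>n. C n)"
    by (rule INF_emeasure_decseq'[OF C \<open>decseq C\<close>]) (use fin in blast)
  have "c \<le> (INF n. emeasure lebesgue (C n))"
  proof (rule INF_greatest)
    fix n
    have "outer_measure_of lebesgue (Sn H mm n) \<le> outer_measure_of lebesgue (C n)"
      unfolding C_def by (rule outer_measure_of_mono) (rule closure_subset)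
    also have "\<dots> = emeasure lebesgue (C n)" using C by (rule outer_measure_of_eq)
    finally show "c \<le> emeasure lebesgue (C n)" using mm[of n] by order
  qed
  then have "c \<le> emeasure lebesgue (\<Inter>n. C n)" unfolding eq .
  moreover have "(\<Inter>n. C n) \<in> sets lebesgue"
  proof -
    have "closed (\<Inter>n. C n)" unfolding C_def by (intro closed_INT) auto
    then show ?thesis by (simp add: borel_closed)
  qed
  moreover have "(\<Inter>n. C n) \<subseteq> fst ` H" unfolding C_def by (rule Sn_closure_Inter[OF assms(1)])
  ultimately show "\<exists>K\<in>sets lebesgue. K \<subseteq> fst ` H \<and> c \<le> emeasure lebesgue K" by blast
qed



lemma suslin_sum_lebesgue:
  fixes A B :: "'a::euclidean_space set"
  assumes "suslin A" "suslin B"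
  shows "{x. \<exists>y. x - y \<in> A \<and> y \<in> B} \<in> sets lebesgue"
proof -
  obtain F :: "('a \<times> (nat \<Rightarrow> nat)) set" where F: "closed F" "A = fst ` F"
    using assms(1) unfolding suslin_def by blast
  obtain G :: "('a \<times> (nat \<Rightarrow> nat)) set" where G: "closed G" "B = fst ` G"
    using assms(2) unfolding suslin_def by blast
  define H :: "('a \<times> ('a \<times> (nat \<Rightarrow> nat))) set" where
    "H = {z. (fst z - fst (snd z), \<lambda>k. snd (snd z) (2*k)) \<in> F \<and> (fst (snd z), \<lambda>k. snd (snd z) (2*k+1)) \<in> G}"
  have "closed H"
    unfolding closed_sequential_limits
  proof (intro allI impI, elim conjE)
    fix s :: "nat \<Rightarrow> 'a \<times> ('a \<times> (nat \<Rightarrow> nat))" and l assume sH: "\<forall>n. s n \<in> H" and lim: "s \<longlonglongrightarrow> l"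
    have l1: "(\<lambda>n. fst (s n)) \<longlonglongrightarrow> fst l" and l2: "(\<lambda>n. fst (snd (s n))) \<longlonglongrightarrow> fst (snd l)"
      and l3: "(\<lambda>n. snd (snd (s n))) \<longlonglongrightarrow> snd (snd l)"
      using lim by (auto intro: tendsto_fst tendsto_snd)
    have e: "(\<lambda>n. \<lambda>k. snd (snd (s n)) (2*k)) \<longlonglongrightarrow> (\<lambda>k. snd (snd l) (2*k))"
      using l3 by (simp add: tendsto_fun_iff)
    have o: "(\<lambda>n. \<lambda>k. snd (snd (s n)) (2*k+1)) \<longlonglongrightarrow> (\<lambda>k. snd (snd l) (2*k+1))"
      using l3 by (simp add: tendsto_fun_iff)
    have "(\<lambda>n. (fst (s n) - fst (snd (s n)), \<lambda>k. snd (snd (s n)) (2*k))) \<longlonglongrightarrow> (fst l - fst (snd l), \<lambda>k. snd (snd l) (2*k))"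
      by (intro tendsto_Pair tendsto_diff l1 l2 e)
    moreover have "\<forall>n. (fst (s n) - fst (snd (s n)), \<lambda>k. snd (snd (s n)) (2*k)) \<in> F" using sH by (simp add: H_def)
    ultimately have 1: "(fst l - fst (snd l), \<lambda>k. snd (snd l) (2*k)) \<in> F"
      by (intro Lim_in_closed_set[OF F(1)]) auto
    have "(\<lambda>n. (fst (snd (s n)), \<lambda>k. snd (snd (s n)) (2*k+1))) \<longlonglongrightarrow> (fst (snd l), \<lambda>k. snd (snd l) (2*k+1))"
      by (intro tendsto_Pair l2 o)
    moreover have "\<forall>n. (fst (snd (s n)), \<lambda>k. snd (snd (s n)) (2*k+1)) \<in> G" using sH by (simp add: H_def)
    ultimately have 2: "(fst (snd l), \<lambda>k. snd (snd l) (2*k+1)) \<in> G"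
      by (intro Lim_in_closed_set[OF G(1)]) auto
    show "l \<in> H" using 1 2 by (simp add: H_def)
  qed
  have S: "{x. \<exists>y. x - y \<in> A \<and> y \<in> B} = fst ` H"
  proof (intro equalityI subsetI)
    fix x assume "x \<in> {x. \<exists>y. x - y \<in> A \<and> y \<in> B}"
    then obtain y \<sigma> \<tau> where st: "(x - y, \<sigma>) \<in> F" "(y, \<tau>) \<in> G" using F(2) G(2) by force
    define \<rho> where "\<rho> j = (if even j then \<sigma> (j div 2) else \<tau> (j div 2))" for j
    have "(\<lambda>k. \<rho> (2*k)) = \<sigma>" "(\<lambda>k. \<rho> (2*k+1)) = \<tau>" by (auto simp: \<rho>_def)
    then have "(x, (y, \<rho>)) \<in> H" using st by (simp add: H_def)
    then show "x \<in> fst ` H" by force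
  next
    fix x assume "x \<in> fst ` H"
    then obtain y \<rho> where "(x, (y, \<rho>)) \<in> H" by force
    then show "x \<in> {x. \<exists>y. x - y \<in> A \<and> y \<in> B}" using F(2) G(2) unfolding H_def by force
  qed
  define HR where "HR R = H \<inter> (cball 0 (real R) \<times> UNIV)" for R :: nat
  have "fst ` HR R \<in> sets lebesgue" for R
  proof (rule closed_proj_lebesgue_bounded)
    show "closed (HR R)" unfolding HR_def using \<open>closed H\<close> by (intro closed_Int closed_Times) auto
    have "fst ` HR R \<subseteq> cball 0 (real R)" unfolding HR_def by auto
    then show "bounded (fst ` HR R)" using bounded_cball bounded_subset by blast
  qed
  then have "(\<Union>R. fst ` HR R) \<in> sets lebesgue" by (intro sets.countable_UN) auto
  moreover have "(\<Union>R. fst ` HR R) = fst ` H"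
  proof (intro equalityI subsetI)
    fix x assume "x \<in> fst ` H"
    then obtain p where p: "(x, p) \<in> H" by force
    obtain R :: nat where "norm x \<le> real R" using real_arch_simple by blast
    then have "(x, p) \<in> HR R" using p by (simp add: HR_def)
    then show "x \<in> (\<Union>R. fst ` HR R)" by force
  qed (auto simp: HR_def)
  ultimately show ?thesis using S by simp
qed

lemma borel_set_suslin_pred:
  fixes f :: "'a::euclidean_space \<Rightarrow> ereal"
  assumes "f \<in> borel_measurable borel" "open U"
  shows "suslin {u. f u \<in> U}"
proof -
  have "f -` U \<inter> space borel \<in> sets borel" by (rule measurable_sets[OF assms(1)]) (simp add: assms(2))
  moreover have "f -` U \<inter> space borel = {u. f u \<in> U}" by auto
  ultimately show ?thesis using suslin_borel by metis
qed

theorem lemma2: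
  fixes f g :: "'a::euclidean_space \<Rightarrow> ereal"
  assumes "f \<in> borel_measurable borel" and "g \<in> borel_measurable borel"
  shows "sup_min_conv f g \<in> borel_measurable lebesgue \<and>
         inf_max_conv f g \<in> borel_measurable lebesgue"
proof
  show "sup_min_conv f g \<in> borel_measurable lebesgue"
  proof (rule borel_measurableI_greater)
    fix a :: ereal
    have "{x \<in> space lebesgue. a < sup_min_conv f g x} = {x. \<exists>y. x - y \<in> {u. f u \<in> {a<..}} \<and> y \<in> {u. g u \<in> {a<..}}}"
      by (auto simp: sup_min_conv_def less_SUP_iff)
    also have "\<dots> \<in> sets lebesgue"
      by (intro suslin_sum_lebesgue borel_set_suslin_pred assms) auto
    finally show "{x \<in> space lebesgue. a < sup_min_conv f g x} \<in> sets lebesgue" .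
  qed
  show "inf_max_conv f g \<in> borel_measurable lebesgue"
  proof (rule borel_measurableI_less)
    fix a :: ereal
    have "{x \<in> space lebesgue. inf_max_conv f g x < a} = {x. \<exists>y. x - y \<in> {u. f u \<in> {..<a}} \<and> y \<in> {u. g u \<in> {..<a}}}"
      by (auto simp: inf_max_conv_def INF_less_iff)
    also have "\<dots> \<in> sets lebesgue"
      by (intro suslin_sum_lebesgue borel_set_suslin_pred assms) auto
    finally show "{x \<in> space lebesgue. inf_max_conv f g x < a} \<in> sets lebesgue" .
  qed
qed

end
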